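(* Let $\Delta,\Sigma$ be alphabets, $\varphi:\Delta\to2^{\Sigma^*}$ a regular language substitution, and $K_1,K_2\subseteq\Delta^+$ regular languages such that $\mathcal{R}_1=(K_1,\varphi)$ and $\mathcal{R}_2=(K_2,\varphi)$ are finite. Then $\mathcal{R}_1\cap\mathcal{R}_2$ is a finite rational set of regular languages that can be expressed with the language substitution $\varphi$, i.e. $\mathcal{R}_1\cap\mathcal{R}_2=(K_3,\varphi)$ for some regular $K_3\subseteq\Delta^+$.
   Context: A regular language substitution $\varphi:\Delta\to2^{\Sigma^*}$ maps each symbol to a regular language over $\Sigma$, extended by $\varphi(\delta w)=\varphi(\delta)\varphi(w)$. For $K\subseteq\Delta^+$, $(K,\varphi)=\{\varphi(w)\mid w\in K\}$; when $K$ is regular this set is a rational set of regular languages. Intersection is the ordinary set intersection of the two sets of languages. *)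

theory Defs
  imports Main
begin

definition conc :: "'a list set \<Rightarrow> 'a list set \<Rightarrow> 'a list set" where
  "conc A B = {u @ v | u v. u \<in> A \<and> v \<in> B}"

primrec lpow :: "'a list set \<Rightarrow> nat \<Rightarrow> 'a list set" where
  "lpow A 0 = {[]}"
| "lpow A (Suc n) = conc A (lpow A n)"

definition kstar :: "'a list set \<Rightarrow> 'a list set" where
  "kstar A = (\<Union>n. lpow A n)"

text \<open>Regular languages: the smallest class containing the finite basic languages and
  closed under union, concatenation and Kleene star (Kleene's theorem).\<close>
inductive regular :: "'a list set \<Rightarrow> bool" where
  reg_empty: "regular {}"
| reg_eps: "regular {[]}"
| reg_sym: "regular {[a]}"
| reg_union: "regular A \<Longrightarrow> regular B \<Longrightarrow> regular (A \<union> B)"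
| reg_conc: "regular A \<Longrightarrow> regular B \<Longrightarrow> regular (conc A B)"
| reg_star: "regular A \<Longrightarrow> regular (kstar A)"

primrec lsubst :: "('d \<Rightarrow> 's list set) \<Rightarrow> 'd list \<Rightarrow> 's list set" where
  "lsubst \<phi> [] = {[]}"
| "lsubst \<phi> (d # w) = conc (\<phi> d) (lsubst \<phi> w)"

definition regular_subst :: "('d \<Rightarrow> 's list set) \<Rightarrow> bool" where
  "regular_subst \<phi> \<longleftrightarrow> (\<forall>d. regular (\<phi> d))"

definition ratset :: "'d list set \<Rightarrow> ('d \<Rightarrow> 's list set) \<Rightarrow> 's list set set" where
  "ratset K \<phi> = lsubst \<phi> ` K"

end

theory Submission
  imports Defs
begin

lemma regular_single: "regular {w}"
proof (induction w)
  case Nil show ?case by (rule reg_eps)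
next
  case (Cons a w)
  have "{a # w} = conc {[a]} {w}" by (auto simp: conc_def)
  then show ?case using reg_conc[OF reg_sym Cons] by simp
qed

lemma regular_finite: "finite A \<Longrightarrow> regular A"
proof (induction A rule: finite_induct)
  case empty show ?case by (rule reg_empty)
next
  case (insert w A)
  have "insert w A = {w} \<union> A" by auto
  then show ?case using reg_union[OF regular_single insert(3)] by simp
qed

theorem proposition7:
  fixes \<phi> :: "'d::finite \<Rightarrow> 's::finite list set"
    and K1 K2 :: "'d list set"
  assumes "regular_subst \<phi>"
    and "regular K1" and "K1 \<subseteq> {w. w \<noteq> []}"
    and "regular K2" and "K2 \<subseteq> {w. w \<noteq> []}"
    and "finite (ratset K1 \<phi>)" and "finite (ratset K2 \<phi>)"
  shows "\<exists>K3 :: 'd list set. regular K3 \<and> K3 \<subseteq> {w. w \<noteq> []} \<and>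
           finite (ratset K1 \<phi> \<inter> ratset K2 \<phi>) \<and>
           ratset K1 \<phi> \<inter> ratset K2 \<phi> = ratset K3 \<phi>"
proof -
  let ?R = "ratset K1 \<phi> \<inter> ratset K2 \<phi>"
  define f where "f L = (SOME w. w \<in> K1 \<and> lsubst \<phi> w = L)" for L
  have f: "f L \<in> K1 \<and> lsubst \<phi> (f L) = L" if "L \<in> ?R" for L
  proof -
    from that obtain w where "w \<in> K1" "lsubst \<phi> w = L" by (auto simp: ratset_def)
    then have "\<exists>w. w \<in> K1 \<and> lsubst \<phi> w = L" by blast
    then show ?thesis unfolding f_def by (rule someI_ex)
  qed
  have fin: "finite ?R" using assms(6) by simp
  have "regular (f ` ?R)" using fin by (intro regular_finite) simp
  moreover have "f ` ?R \<subseteq> {w. w \<noteq> []}"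
  proof
    fix x assume "x \<in> f ` ?R"
    then obtain L where "L \<in> ?R" "x = f L" by blast
    then show "x \<in> {w. w \<noteq> []}" proof -
      have "f L \<in> K1" using f[OF \<open>L \<in> ?R\<close>] by simp
      then show ?thesis using \<open>x = f L\<close> assms(3) by (simp add: subset_iff)
    qed
  qed
  moreover have "ratset (f ` ?R) \<phi> = ?R"
  proof -
    have "ratset (f ` ?R) \<phi> = (\<lambda>L. lsubst \<phi> (f L)) ` ?R" unfolding ratset_def image_image ..
    also have "\<dots> = (\<lambda>L. L) ` ?R" by (rule image_cong) (use f in simp_all)
    finally show ?thesis by simp
  qed
  ultimately show ?thesis using fin by metis
qed

end
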